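(* Let $\{\mathcal{K}^s:s\geq0\}$ be a strongly continuous one-parameter semigroup of isometries on a complex Hilbert space $\mathcal{H}$, and let $\mathcal{H}_U=\bigcap_{s\geq0}\mathcal{K}^s\mathcal{H}$. Let $h\in\mathcal{H}_U$ and suppose there is a finite positive Borel measure $\mu$ on $\mathbb{R}$ with no atoms such that $\langle\mathcal{K}^sh,\mathcal{K}^th\rangle=\int_{\mathbb{R}}e^{i(s-t)x}\,d\mu(x)$ for all $s,t\geq0$ (i.e. $h$ has purely continuous spectral measure). Then $$\lim_{\tau\to\infty}\lambda_{h,\tau,1}=0.$$
   Context: A strongly continuous one-parameter semigroup of isometries means: each $\mathcal{K}^s$ is a linear isometry, $\mathcal{K}^0=I$, $\mathcal{K}^{s_1}\mathcal{K}^{s_2}=\mathcal{K}^{s_1+s_2}$, and $s\mapsto\mathcal{K}^sh$ is norm-continuous for each $h$. On $\mathcal{H}_U$ the operators $\mathcal{K}^s$ act unitarily. Inner products are linear in the first argument. For $h\in\mathcal{H}$ and $\tau>0$, $A_{h,\tau}$ is the operator on $L^2([0,\tau])$ defined by $(A_{h,\tau}g)(t)=\frac1\tau\int_0^\tau g(s)\langle\mathcal{K}^sh,\mathcal{K}^th\rangle\,ds$; it is a positive semidefinite self-adjoint compact operator, and $\lambda_{h,\tau,1}=\sup_{g\neq0}\langle A_{h,\tau}g,g\rangle/\|g\|^2$ is its largest eigenvalue. *)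

theory Defs
  imports "HOL-Analysis.Analysis"
begin

text \<open>A complex Hilbert space, rendered on a real Banach space type 'a
  (vector addition, real scaling and norm come from the type class) together with
  a complex scalar multiplication sm extending the real one and a complex inner
  product ip, linear in the first argument, conjugate symmetric, inducing the norm.\<close>
definition complex_hilbert :: "(complex \<Rightarrow> 'a::banach \<Rightarrow> 'a) \<Rightarrow> ('a \<Rightarrow> 'a \<Rightarrow> complex) \<Rightarrow> bool" where
  "complex_hilbert sm ip \<longleftrightarrow>
     (\<forall>r x. sm (complex_of_real r) x = scaleR r x) \<and>
     (\<forall>a b x. sm (a * b) x = sm a (sm b x)) \<and>
     (\<forall>a b x. sm (a + b) x = sm a x + sm b x) \<and>
     (\<forall>a x y. sm a (x + y) = sm a x + sm a y) \<and>
     (\<forall>x y z. ip (x + y) z = ip x z + ip y z) \<and>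
     (\<forall>a x y. ip (sm a x) y = a * ip x y) \<and>
     (\<forall>x y. ip y x = cnj (ip x y)) \<and>
     (\<forall>x. norm x = sqrt (Re (ip x x)))"

definition isometry_semigroup :: "(complex \<Rightarrow> 'a::banach \<Rightarrow> 'a) \<Rightarrow> (real \<Rightarrow> 'a \<Rightarrow> 'a) \<Rightarrow> bool" where
  "isometry_semigroup sm K \<longleftrightarrow>
     (\<forall>s\<ge>0. (\<forall>x y. K s (x + y) = K s x + K s y) \<and> (\<forall>a x. K s (sm a x) = sm a (K s x))
            \<and> (\<forall>x. norm (K s x) = norm x)) \<and>
     (\<forall>x. K 0 x = x) \<and>
     (\<forall>s1\<ge>0. \<forall>s2\<ge>0. \<forall>x. K (s1 + s2) x = K s1 (K s2 x)) \<and>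
     (\<forall>x. continuous_on {0..} (\<lambda>s. K s x))"

definition unitary_part :: "(real \<Rightarrow> 'a \<Rightarrow> 'a) \<Rightarrow> 'a set" where
  "unitary_part K = (\<Inter>s\<in>{0..}. range (K s))"

definition L2_on :: "real \<Rightarrow> (real \<Rightarrow> complex) \<Rightarrow> bool" where
  "L2_on \<tau> g \<longleftrightarrow> g \<in> borel_measurable lborel \<and>
      set_integrable lborel {0..\<tau>} (\<lambda>t. (cmod (g t))^2)"

definition L2_normsq :: "real \<Rightarrow> (real \<Rightarrow> complex) \<Rightarrow> real" where
  "L2_normsq \<tau> g = (LINT t:{0..\<tau>}|lborel. (cmod (g t))^2)"

definition A_op :: "(real \<Rightarrow> real \<Rightarrow> complex) \<Rightarrow> real \<Rightarrow> (real \<Rightarrow> complex) \<Rightarrow> real \<Rightarrow> complex" where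
  "A_op k \<tau> g t = (LINT s:{0..\<tau>}|lborel. g s * k s t) / complex_of_real \<tau>"

definition A_form :: "(real \<Rightarrow> real \<Rightarrow> complex) \<Rightarrow> real \<Rightarrow> (real \<Rightarrow> complex) \<Rightarrow> complex" where
  "A_form k \<tau> g = (LINT t:{0..\<tau>}|lborel. A_op k \<tau> g t * cnj (g t))"

text \<open>lambda_{h,tau,1}: supremum of the Rayleigh quotient (which is real, A being self-adjoint).\<close>
definition lambda1 :: "('a \<Rightarrow> 'a \<Rightarrow> complex) \<Rightarrow> (real \<Rightarrow> 'a \<Rightarrow> 'a) \<Rightarrow> 'a \<Rightarrow> real \<Rightarrow> real" where
  "lambda1 ip K h \<tau> =
     Sup {Re (A_form (\<lambda>s t. ip (K s h) (K t h)) \<tau> g) / L2_normsq \<tau> g | g. L2_on \<tau> g \<and> L2_normsq \<tau> g \<noteq> 0}"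

end

theory Submission
  imports Defs "HOL-Real_Asymp.Real_Asymp"
begin

lemma meas_cong_mu:
  assumes "sets \<mu> = sets (borel::real measure)"
  shows "(f::real\<Rightarrow>real) \<in> borel_measurable borel \<Longrightarrow> f \<in> borel_measurable \<mu>"
  by (subst measurable_cong_sets[OF assms refl])

lemma meas_cong_mu2:
  assumes "sets \<mu> = sets (borel::real measure)"
  shows "(f::real\<times>real\<Rightarrow>real) \<in> borel_measurable (borel \<Otimes>\<^sub>M borel) \<Longrightarrow> f \<in> borel_measurable (\<mu> \<Otimes>\<^sub>M \<mu>)"
  by (subst measurable_cong_sets[OF sets_pair_measure_cong[OF assms assms] refl])

lemma phi_sq:
  fixes \<mu> :: "real measure"
  assumes S: "sets \<mu> = sets borel" and F: "finite_measure \<mu>"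
  shows "(cmod (\<integral>x. cis (v * x) \<partial>\<mu>))^2 = (\<integral>p. cos (v * (fst p - snd p)) \<partial>(\<mu> \<Otimes>\<^sub>M \<mu>))"
proof -
  interpret finite_measure \<mu> by fact
  interpret P: pair_sigma_finite \<mu> \<mu> ..
  have mc: "(\<lambda>x. cos (v * x)) \<in> borel_measurable \<mu>" "(\<lambda>x. sin (v * x)) \<in> borel_measurable \<mu>"
    by (rule meas_cong_mu[OF S], measurable)+
  have ic: "integrable \<mu> (\<lambda>x. cos (v * x))" "integrable \<mu> (\<lambda>x. sin (v * x))"
    by (rule integrable_const_bound[where B=1]; use mc in auto)+
  have mcx: "(\<lambda>x. cis (v * x)) \<in> borel_measurable \<mu>"
    by (subst measurable_cong_sets[OF S refl], rule borel_measurable_continuous_onI, intro continuous_intros)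
  have icx: "integrable \<mu> (\<lambda>x. cis (v * x))"
    by (rule integrable_const_bound[where B=1]; use mcx in auto)
  have re: "Re (\<integral>x. cis (v * x) \<partial>\<mu>) = (\<integral>x. cos (v * x) \<partial>\<mu>)"
    using integral_Re[OF icx] by simp
  have im: "Im (\<integral>x. cis (v * x) \<partial>\<mu>) = (\<integral>x. sin (v * x) \<partial>\<mu>)"
    using integral_Im[OF icx] by simp
  have prod: "(\<integral>x. f x \<partial>\<mu>) * (\<integral>x. f x \<partial>\<mu>) = (\<integral>p. f (fst p) * f (snd p) \<partial>(\<mu> \<Otimes>\<^sub>M \<mu>)) \<and> integrable (\<mu> \<Otimes>\<^sub>M \<mu>) (\<lambda>p. f (fst p) * f (snd p))"
    if fm: "(f::real\<Rightarrow>real) \<in> borel_measurable \<mu>" and fb: "\<And>x. \<bar>f x\<bar> \<le> 1" for f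
  proof -
    interpret PF: finite_measure "\<mu> \<Otimes>\<^sub>M \<mu>"
      by (rule finite_measure_pair_measure) (use F in auto)
    have int: "integrable (\<mu> \<Otimes>\<^sub>M \<mu>) (\<lambda>p. f (fst p) * f (snd p))"
    proof (rule PF.integrable_const_bound[where B=1])
      show "AE x in \<mu> \<Otimes>\<^sub>M \<mu>. norm (f (fst x) * f (snd x)) \<le> 1"
        using fb by (auto simp: abs_mult intro!: mult_le_one)
      show "(\<lambda>p. f (fst p) * f (snd p)) \<in> borel_measurable (\<mu> \<Otimes>\<^sub>M \<mu>)"
        using fm by measurable
    qed
    show ?thesis
      using P.integral_fst'[OF int] int by (simp add: integral_mult_left integral_mult_right)
  qed
  have c: "(\<integral>x. cos (v * x) \<partial>\<mu>) * (\<integral>x. cos (v * x) \<partial>\<mu>) = (\<integral>p. cos (v * fst p) * cos (v * snd p) \<partial>(\<mu> \<Otimes>\<^sub>M \<mu>))"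
     "integrable (\<mu> \<Otimes>\<^sub>M \<mu>) (\<lambda>p. cos (v * fst p) * cos (v * snd p))"
    using prod[of "\<lambda>x. cos (v * x)"] mc by auto
  have s: "(\<integral>x. sin (v * x) \<partial>\<mu>) * (\<integral>x. sin (v * x) \<partial>\<mu>) = (\<integral>p. sin (v * fst p) * sin (v * snd p) \<partial>(\<mu> \<Otimes>\<^sub>M \<mu>))"
     "integrable (\<mu> \<Otimes>\<^sub>M \<mu>) (\<lambda>p. sin (v * fst p) * sin (v * snd p))"
    using prod[of "\<lambda>x. sin (v * x)"] mc by auto
  have "(cmod (\<integral>x. cis (v * x) \<partial>\<mu>))^2 = (\<integral>p. cos (v * fst p) * cos (v * snd p) + sin (v * fst p) * sin (v * snd p) \<partial>(\<mu> \<Otimes>\<^sub>M \<mu>))"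
  proof -
    have "\<And>z. (cmod z)^2 = Re z * Re z + Im z * Im z" by (simp add: norm_complex_def power2_eq_square)
    then show ?thesis using re im c s Bochner_Integration.integral_add[OF c(2) s(2)] by simp
  qed
  also have "\<dots> = (\<integral>p. cos (v * (fst p - snd p)) \<partial>(\<mu> \<Otimes>\<^sub>M \<mu>))"
    by (simp add: right_diff_distrib cos_diff)
  finally show ?thesis .
qed

lemma int_mono_nonneg:
  fixes f g :: "'b \<Rightarrow> real"
  assumes "\<And>x. 0 \<le> f x" "\<And>x. f x \<le> g x" "integrable M g"
  shows "integral\<^sup>L M f \<le> integral\<^sup>L M g"
proof (cases "integrable M f")
  case True then show ?thesis using assms by (intro integral_mono) auto
next
  case False
  then have "integral\<^sup>L M f = 0" by (rule not_integrable_integral_eq)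
  moreover have "0 \<le> integral\<^sup>L M g" using assms by (intro integral_nonneg_AE) (auto intro: order_trans)
  ultimately show ?thesis by simp
qed

lemma cos_int_bound:
  fixes \<tau> t z :: real
  assumes tau: "\<tau> > 0"
  shows "\<bar>LINT s:{0..\<tau>}|lborel. cos ((s - t) * z)\<bar> \<le> 4 * \<tau> / (1 + \<tau> * \<bar>z\<bar>)"
proof -
  define X where "X = \<bar>LINT s:{0..\<tau>}|lborel. cos ((s - t) * z)\<bar>"
  have b1: "X \<le> \<tau>"
  proof -
    have "X \<le> (\<integral>s. norm (indicator {0..\<tau>} s *\<^sub>R cos ((s - t) * z)) \<partial>lborel)"
      unfolding X_def set_lebesgue_integral_def real_norm_def[symmetric] by (rule integral_norm_bound)
    also have "\<dots> \<le> (\<integral>s. indicator {0..\<tau>} s \<partial>lborel)"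
      by (rule int_mono_nonneg) (auto split: split_indicator intro!: integrable_real_indicator simp: emeasure_lborel_Icc_eq)
    also have "\<dots> = \<tau>" using tau by simp
    finally show ?thesis .
  qed
  have b2: "\<bar>z\<bar> * X \<le> 2" if z: "z \<noteq> 0"
  proof -
    have "(LINT s:{0..\<tau>}|lborel. cos ((s - t) * z)) = sin ((\<tau> - t) * z) / z - sin ((0 - t) * z) / z"
      unfolding set_lebesgue_integral_def
    proof (rule integral_FTC_atLeastAtMost)
      show "0 \<le> \<tau>" using tau by simp
      show "continuous_on {0..\<tau>} (\<lambda>s. cos ((s - t) * z))" by (intro continuous_intros)
      fix x
      have "((\<lambda>s. sin ((s - t) * z) / z) has_real_derivative cos ((x - t) * z)) (at x within {0..\<tau>})"
        using z by (auto intro!: derivative_eq_intros)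
      then show "((\<lambda>s. sin ((s - t) * z) / z) has_vector_derivative cos ((x - t) * z)) (at x within {0..\<tau>})"
        by (simp add: has_real_derivative_iff_has_vector_derivative)
    qed
    then have "\<bar>z\<bar> * X = \<bar>sin ((\<tau> - t) * z) + sin (t * z)\<bar>"
      unfolding X_def using z by (simp add: add_divide_distrib[symmetric] abs_divide)
    also have "\<dots> \<le> 2" using abs_sin_le_one[of "(\<tau> - t) * z"] abs_sin_le_one[of "t * z"] by linarith
    finally show ?thesis .
  qed
  have X0: "0 \<le> X" unfolding X_def by simp
  have "X * (1 + \<tau> * \<bar>z\<bar>) \<le> 4 * \<tau>"
  proof (cases "z = 0")
    case True then show ?thesis using b1 tau by simp
  next
    case False
    have "X * (1 + \<tau> * \<bar>z\<bar>) = X + \<tau> * (\<bar>z\<bar> * X)" by (simp add: algebra_simps)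
    also have "\<dots> \<le> \<tau> + \<tau> * 2" using b1 b2[OF False] tau by (intro add_mono mult_left_mono) auto
    finally show ?thesis using tau by simp
  qed
  then show ?thesis unfolding X_def[symmetric] using tau
    by (simp add: pos_le_divide_eq add_pos_nonneg)
qed

lemma phi_sq_int_bound:
  fixes \<mu> :: "real measure"
  assumes S: "sets \<mu> = sets borel" and F: "finite_measure \<mu>" and tau: "\<tau> > 0"
  shows "(LINT s:{0..\<tau>}|lborel. (cmod (\<integral>x. cis ((s - t) * x) \<partial>\<mu>))^2)
     \<le> (\<integral>p. 4 * \<tau> / (1 + \<tau> * \<bar>fst p - snd p\<bar>) \<partial>(\<mu> \<Otimes>\<^sub>M \<mu>))"
proof -
  define M where "M = \<mu> \<Otimes>\<^sub>M \<mu>"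
  define N where "N = restrict_space lborel {0..\<tau>}"
  interpret FM: finite_measure M unfolding M_def by (rule finite_measure_pair_measure) (use F in auto)
  interpret FN: finite_measure N
    unfolding N_def by (rule finite_measureI) (simp add: emeasure_restrict_space emeasure_lborel_Icc_eq)
  interpret P: pair_sigma_finite N M ..
  interpret PF: finite_measure "N \<Otimes>\<^sub>M M" by (rule finite_measure_pair_measure) (unfold_locales)
  have SM: "sets M = sets (borel \<Otimes>\<^sub>M borel)" unfolding M_def by (rule sets_pair_measure_cong[OF S S])
  have idm[measurable]: "(\<lambda>x. x) \<in> borel_measurable N"
    unfolding N_def by (rule measurable_restrict_space1) simp
  have "(\<lambda>x. cos ((fst x - t) * (fst (snd x) - snd (snd x)))) \<in> borel_measurable (N \<Otimes>\<^sub>M (borel \<Otimes>\<^sub>M borel))"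
    by measurable
  then have meas: "(\<lambda>(s, p). cos ((s - t) * (fst p - snd p))) \<in> borel_measurable (N \<Otimes>\<^sub>M M)"
    unfolding measurable_cong_sets[OF sets_pair_measure_cong[OF refl SM] refl]
    by (simp add: case_prod_beta)
  have int: "integrable (N \<Otimes>\<^sub>M M) (\<lambda>(s, p). cos ((s - t) * (fst p - snd p)))"
    by (rule PF.integrable_const_bound[where B=1]) (use meas in auto)
  have "(LINT s:{0..\<tau>}|lborel. (cmod (\<integral>x. cis ((s - t) * x) \<partial>\<mu>))^2)
      = (\<integral>s. (cmod (\<integral>x. cis ((s - t) * x) \<partial>\<mu>))^2 \<partial>N)"
    unfolding N_def set_lebesgue_integral_def by (rule integral_restrict_space[symmetric]) simp
  also have "\<dots> = (\<integral>s. (\<integral>p. cos ((s - t) * (fst p - snd p)) \<partial>M) \<partial>N)"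
    unfolding M_def by (simp add: phi_sq[OF S F])
  also have "\<dots> = (\<integral>p. (\<integral>s. cos ((s - t) * (fst p - snd p)) \<partial>N) \<partial>M)"
    using P.Fubini_integral[of "\<lambda>s p. cos ((s - t) * (fst p - snd p))"] int by simp
  also have "\<dots> \<le> \<bar>\<integral>p. (\<integral>s. cos ((s - t) * (fst p - snd p)) \<partial>N) \<partial>M\<bar>" by simp
  also have "\<dots> \<le> (\<integral>p. \<bar>\<integral>s. cos ((s - t) * (fst p - snd p)) \<partial>N\<bar> \<partial>M)"
    by (rule integral_abs_bound)
  also have "\<dots> \<le> (\<integral>p. 4 * \<tau> / (1 + \<tau> * \<bar>fst p - snd p\<bar>) \<partial>M)"
  proof (rule int_mono_nonneg)
    fix p
    have "(\<integral>s. cos ((s - t) * (fst p - snd p)) \<partial>N) = (LINT s:{0..\<tau>}|lborel. cos ((s - t) * (fst p - snd p)))"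
      unfolding N_def set_lebesgue_integral_def by (rule integral_restrict_space) simp
    then show "\<bar>\<integral>s. cos ((s - t) * (fst p - snd p)) \<partial>N\<bar> \<le> 4 * \<tau> / (1 + \<tau> * \<bar>fst p - snd p\<bar>)"
      using cos_int_bound[OF tau] by simp
    show "0 \<le> \<bar>\<integral>s. cos ((s - t) * (fst p - snd p)) \<partial>N\<bar>" by simp
  next
    show "integrable M (\<lambda>p. 4 * \<tau> / (1 + \<tau> * \<bar>fst p - snd p\<bar>))"
    proof (rule FM.integrable_const_bound[where B="4*\<tau>"])
      show "AE x in M. norm (4 * \<tau> / (1 + \<tau> * \<bar>fst x - snd x\<bar>)) \<le> 4 * \<tau>"
        using tau by (auto simp: divide_le_eq intro!: AE_I2)
      show "(\<lambda>p. 4 * \<tau> / (1 + \<tau> * \<bar>fst p - snd p\<bar>)) \<in> borel_measurable M"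
        unfolding measurable_cong_sets[OF SM refl] by measurable
    qed
  qed
  finally show ?thesis unfolding M_def .
qed

lemma E_tendsto:
  fixes \<mu> :: "real measure"
  assumes S: "sets \<mu> = sets borel" and F: "finite_measure \<mu>" and NA: "\<forall>x. emeasure \<mu> {x} = 0"
  shows "((\<lambda>\<tau>. \<integral>p. 4 / (1 + \<tau> * \<bar>fst p - snd p\<bar>) \<partial>(\<mu> \<Otimes>\<^sub>M \<mu>)) \<longlongrightarrow> 0) at_top"
proof -
  define M where "M = \<mu> \<Otimes>\<^sub>M \<mu>"
  interpret FM: finite_measure M unfolding M_def by (rule finite_measure_pair_measure) (use F in auto)
  interpret Fm: finite_measure \<mu> by fact
  have SM: "sets M = sets (borel \<Otimes>\<^sub>M borel)" unfolding M_def by (rule sets_pair_measure_cong[OF S S])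
  define D where "D = {y. \<exists>x::real. y = (x,x)}"
  have DS: "D \<in> sets M" unfolding SM borel_prod D_def by (rule borel_closed[OF closed_diagonal])
  have MD: "emeasure M D = 0"
  proof -
    have "emeasure M D = (\<integral>\<^sup>+x. emeasure \<mu> (Pair x -` D) \<partial>\<mu>)"
      unfolding M_def by (rule Fm.emeasure_pair_measure_alt) (use DS M_def in simp)
    also have "\<dots> = (\<integral>\<^sup>+x. emeasure \<mu> {x} \<partial>\<mu>)"
      by (rule nn_integral_cong) (auto simp: D_def)
    also have "\<dots> = 0" using NA by simp
    finally show ?thesis .
  qed
  have lim: "((\<lambda>\<tau>. \<integral>p. 4 / (1 + \<tau> * \<bar>fst p - snd p\<bar>) \<partial>M) \<longlongrightarrow> (\<integral>p. 4 * indicator D p \<partial>M)) at_top"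
  proof (rule integral_dominated_convergence_at_top[where w="\<lambda>_. 4"])
    show "(\<lambda>p. 4 * indicator D p :: real) \<in> borel_measurable M" using DS by measurable
    show "(\<lambda>p. 4 / (1 + \<tau> * \<bar>fst p - snd p\<bar>)) \<in> borel_measurable M" for \<tau>
      unfolding measurable_cong_sets[OF SM refl] by measurable
    show "integrable M (\<lambda>_. 4::real)" by simp
    show "AE p in M. ((\<lambda>\<tau>. 4 / (1 + \<tau> * \<bar>fst p - snd p\<bar>)) \<longlongrightarrow> 4 * indicator D p) at_top"
    proof (rule AE_I2)
      fix p :: "real \<times> real"
      show "((\<lambda>\<tau>. 4 / (1 + \<tau> * \<bar>fst p - snd p\<bar>)) \<longlongrightarrow> 4 * indicator D p) at_top"
      proof (cases "fst p = snd p")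
        case True
        then have "p \<in> D" unfolding D_def by (cases p) auto
        then show ?thesis using True by simp
      next
        case False
        then have "p \<notin> D" unfolding D_def by auto
        moreover have c: "\<bar>fst p - snd p\<bar> > 0" using False by simp
        have "((\<lambda>\<tau>. 4 / (1 + \<tau> * \<bar>fst p - snd p\<bar>)) \<longlongrightarrow> 0) at_top"
          using c by real_asymp
        ultimately show ?thesis by simp
      qed
    qed
    show "\<forall>\<^sub>F i in at_top. AE x in M. norm (4 / (1 + i * \<bar>fst x - snd x\<bar>)) \<le> (4::real)"
      using eventually_ge_at_top[of "0::real"]
      by eventually_elim (auto intro!: AE_I2 simp: divide_le_eq)
  qed
  have "(\<integral>p. 4 * indicator D p \<partial>M) = (0::real)"
    using DS MD by (simp add: measure_def)
  then show ?thesis using lim unfolding M_def by simp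
qed

lemma amgm_pt:
  fixes a x y :: real
  assumes "a > 0"
  shows "x * y \<le> (a * x^2 + y^2 / a) / 2"
proof -
  have "0 \<le> (a * x - y)^2" by simp
  then have h: "2 * a * (x * y) \<le> a^2 * x^2 + y^2"
    by (simp add: power2_eq_square algebra_simps)
  have "(a * x^2 + y^2 / a) / 2 = (a^2 * x^2 + y^2) / (2 * a)"
    using assms by (simp add: field_simps power2_eq_square)
  then show ?thesis using h assms by (simp add: pos_le_divide_eq mult.commute mult.left_commute)
qed

lemma amgm_opt:
  fixes X P Q :: real
  assumes "P > 0" "Q > 0" "\<And>a. a > 0 \<Longrightarrow> X \<le> (a * P + Q / a) / 2"
  shows "X \<le> sqrt (P * Q)"
proof -
  define a where "a = sqrt (Q / P)"
  have a: "a > 0" using assms unfolding a_def by simp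
  have "a * P = sqrt (P * Q)" unfolding a_def using assms
    by (simp add: real_sqrt_divide real_sqrt_mult field_simps)
  moreover have "Q / a = sqrt (P * Q)" unfolding a_def using assms
    by (simp add: real_sqrt_divide real_sqrt_mult field_simps)
  ultimately show ?thesis using assms(3)[OF a] by simp
qed

lemma rayleigh_bound:
  fixes \<mu> :: "real measure" and k :: "real \<Rightarrow> real \<Rightarrow> complex" and g :: "real \<Rightarrow> complex"
  assumes S: "sets \<mu> = sets borel" and F: "finite_measure \<mu>" and tau: "\<tau> > 0"
    and hk: "\<forall>s\<ge>0. \<forall>t\<ge>0. k s t = (\<integral>x. cis ((s - t) * x) \<partial>\<mu>)"
    and L2: "L2_on \<tau> g" and nz: "L2_normsq \<tau> g \<noteq> 0"
  shows "\<bar>Re (A_form k \<tau> g) / L2_normsq \<tau> g\<bar>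
     \<le> sqrt ((\<integral>p. 4 / (1 + \<tau> * \<bar>fst p - snd p\<bar>) \<partial>(\<mu> \<Otimes>\<^sub>M \<mu>)) + 1 / \<tau>)"
proof -
  interpret Fm: finite_measure \<mu> by fact
  define E where "E = (\<integral>p. 4 / (1 + \<tau> * \<bar>fst p - snd p\<bar>) \<partial>(\<mu> \<Otimes>\<^sub>M \<mu>))"
  define N2 where "N2 = L2_normsq \<tau> g"
  define ind where "ind = (\<lambda>s. indicator {0..\<tau>} s :: real)"
  define phi where "phi = (\<lambda>v. \<integral>x. cis (v * x) \<partial>\<mu>)"
  define m where "m = measure \<mu> (space \<mu>)"
  have E0: "0 \<le> E" unfolding E_def
    using tau by (intro integral_nonneg_AE AE_I2) (simp add: add_pos_nonneg)
  define V where "V = \<tau> * E + 1"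
  have V0: "V > 0" unfolding V_def using E0 tau by (simp add: add_nonneg_pos)
  have gint: "integrable lborel (\<lambda>s. ind s * (cmod (g s))^2)"
    using L2 unfolding L2_on_def set_integrable_def ind_def by simp
  have N2eq: "N2 = (\<integral>s. ind s * (cmod (g s))^2 \<partial>lborel)"
    unfolding N2_def L2_normsq_def set_lebesgue_integral_def ind_def by simp
  have N2pos: "N2 > 0"
  proof -
    have "0 \<le> N2" unfolding N2eq ind_def by (intro integral_nonneg_AE AE_I2) simp
    then show ?thesis using nz N2_def by simp
  qed
  have indint: "integrable lborel ind"
    unfolding ind_def by (intro integrable_real_indicator) (auto simp: emeasure_lborel_Icc_eq)
  have intt: "(\<integral>s. ind s \<partial>lborel) = \<tau>"
    unfolding ind_def using tau by simp
  have phim[measurable]: "phi \<in> borel_measurable borel"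
  proof -
    have "(\<lambda>p. cis (fst p * snd p)) \<in> borel_measurable (borel \<Otimes>\<^sub>M borel)"
      unfolding borel_prod by (rule borel_measurable_continuous_onI) (intro continuous_intros)
    then have "case_prod (\<lambda>v x. cis (v * x)) \<in> borel_measurable (borel \<Otimes>\<^sub>M \<mu>)"
      unfolding measurable_cong_sets[OF sets_pair_measure_cong[OF refl S] refl]
      by (simp add: case_prod_beta')
    then show ?thesis unfolding phi_def by (rule Fm.borel_measurable_lebesgue_integral)
  qed
  have phib: "cmod (phi v) \<le> m" for v
  proof -
    have "cmod (phi v) \<le> (\<integral>x. norm (cis (v * x)) \<partial>\<mu>)" unfolding phi_def by (rule integral_norm_bound)
    then show ?thesis by (simp add: m_def)
  qed
  have phiint: "integrable lborel (\<lambda>s. ind s * (cmod (phi (s - t)))^2)" for t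
  proof (rule Bochner_Integration.integrable_bound)
    show "integrable lborel (\<lambda>s. m^2 * ind s)" using indint by simp
    show "(\<lambda>s. ind s * (cmod (phi (s - t)))^2) \<in> borel_measurable lborel"
      unfolding ind_def by measurable
    show "AE x in lborel. norm (ind x * (cmod (phi (x - t)))\<^sup>2) \<le> norm (m^2 * ind x)"
    proof (rule AE_I2)
      fix x
      have "(cmod (phi (x - t)))^2 \<le> m^2" using phib by (intro power_mono) auto
      then show "norm (ind x * (cmod (phi (x - t)))\<^sup>2) \<le> norm (m^2 * ind x)"
        unfolding ind_def by (auto split: split_indicator)
    qed
  qed
  have Mt: "(\<integral>s. ind s * (cmod (phi (s - t)))^2 \<partial>lborel) \<le> V" for t
  proof -
    have "(\<integral>s. ind s * (cmod (phi (s - t)))^2 \<partial>lborel) \<le> (\<integral>p. 4 * \<tau> / (1 + \<tau> * \<bar>fst p - snd p\<bar>) \<partial>(\<mu> \<Otimes>\<^sub>M \<mu>))"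
      using phi_sq_int_bound[OF S F tau, of t] unfolding set_lebesgue_integral_def ind_def phi_def by simp
    also have "\<dots> = \<tau> * E" unfolding E_def by (simp add: integral_mult_right_zero[symmetric] mult.commute)
    finally show ?thesis unfolding V_def by simp
  qed
  have sub1: "cmod (A_op k \<tau> g t) \<le> sqrt (N2 * V) / \<tau>" if t: "t \<in> {0..\<tau>}" for t
  proof -
    have "cmod (LINT s:{0..\<tau>}|lborel. g s * k s t) \<le> (\<integral>s. norm (indicator {0..\<tau>} s *\<^sub>R (g s * k s t)) \<partial>lborel)"
      unfolding set_lebesgue_integral_def by (rule integral_norm_bound)
    also have "\<dots> = (\<integral>s. ind s * (cmod (g s) * cmod (phi (s - t))) \<partial>lborel)"
      by (rule Bochner_Integration.integral_cong) (use hk t in \<open>auto simp: ind_def phi_def norm_mult split: split_indicator\<close>)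
    also have "\<dots> \<le> sqrt (N2 * V)"
    proof (rule amgm_opt[OF N2pos V0])
      fix a :: real assume a: "a > 0"
      have "(\<integral>s. ind s * (cmod (g s) * cmod (phi (s - t))) \<partial>lborel)
          \<le> (\<integral>s. (a/2) * (ind s * (cmod (g s))^2) + (1/(2*a)) * (ind s * (cmod (phi (s - t)))^2) \<partial>lborel)"
      proof (rule int_mono_nonneg)
        fix s
        show "0 \<le> ind s * (cmod (g s) * cmod (phi (s - t)))" unfolding ind_def by simp
        have "cmod (g s) * cmod (phi (s - t)) \<le> (a * (cmod (g s))^2 + (cmod (phi (s - t)))^2 / a) / 2"
          by (rule amgm_pt[OF a])
        then show "ind s * (cmod (g s) * cmod (phi (s - t))) \<le> (a/2) * (ind s * (cmod (g s))^2) + (1/(2*a)) * (ind s * (cmod (phi (s - t)))^2)"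
          unfolding ind_def by (auto split: split_indicator simp: field_simps)
      next
        show "integrable lborel (\<lambda>s. (a/2) * (ind s * (cmod (g s))^2) + (1/(2*a)) * (ind s * (cmod (phi (s - t)))^2))"
          using gint phiint by simp
      qed
      also have "\<dots> = (a/2) * N2 + (1/(2*a)) * (\<integral>s. ind s * (cmod (phi (s - t)))^2 \<partial>lborel)"
        using gint phiint[of t] by (simp add: N2eq)
      also have "\<dots> \<le> (a/2) * N2 + (1/(2*a)) * V" using Mt[of t] a by (simp add: divide_right_mono)
      finally show "(\<integral>s. ind s * (cmod (g s) * cmod (phi (s - t))) \<partial>lborel) \<le> (a * N2 + V / a) / 2"
        by (simp add: field_simps)
    qed
    finally show ?thesis unfolding A_op_def using tau by (simp add: norm_divide divide_right_mono)
  qed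
  define C where "C = sqrt (N2 * V) / \<tau>"
  have C0: "C > 0" unfolding C_def using N2pos V0 tau by simp
  have sub2: "cmod (A_form k \<tau> g) \<le> sqrt ((C * \<tau>) * (C * N2))"
  proof -
    have "cmod (A_form k \<tau> g) \<le> (\<integral>t. norm (indicator {0..\<tau>} t *\<^sub>R (A_op k \<tau> g t * cnj (g t))) \<partial>lborel)"
      unfolding A_form_def set_lebesgue_integral_def by (rule integral_norm_bound)
    also have "\<dots> = (\<integral>t. ind t * (cmod (A_op k \<tau> g t) * cmod (g t)) \<partial>lborel)"
      by (rule Bochner_Integration.integral_cong) (auto simp: ind_def norm_mult split: split_indicator)
    also have "\<dots> \<le> sqrt ((C * \<tau>) * (C * N2))"
    proof (rule amgm_opt)
      show "C * \<tau> > 0" "C * N2 > 0" using C0 tau N2pos by auto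
      fix b :: real assume b: "b > 0"
      have "(\<integral>t. ind t * (cmod (A_op k \<tau> g t) * cmod (g t)) \<partial>lborel)
          \<le> (\<integral>t. (b * C / 2) * ind t + (C / (2 * b)) * (ind t * (cmod (g t))^2) \<partial>lborel)"
      proof (rule int_mono_nonneg)
        fix t
        show "0 \<le> ind t * (cmod (A_op k \<tau> g t) * cmod (g t))" unfolding ind_def by simp
        show "ind t * (cmod (A_op k \<tau> g t) * cmod (g t)) \<le> (b * C / 2) * ind t + (C / (2 * b)) * (ind t * (cmod (g t))^2)"
        proof (cases "t \<in> {0..\<tau>}")
          case True
          have "cmod (A_op k \<tau> g t) * cmod (g t) \<le> C * cmod (g t)"
            using sub1[OF True] unfolding C_def by (intro mult_right_mono) auto
          also have "\<dots> \<le> C * ((b * 1^2 + (cmod (g t))^2 / b) / 2)"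
            using amgm_pt[OF b, of 1 "cmod (g t)"] C0 by (intro mult_left_mono) auto
          finally show ?thesis using True unfolding ind_def by (simp add: field_simps)
        next
          case False then show ?thesis unfolding ind_def by simp
        qed
      next
        show "integrable lborel (\<lambda>t. (b * C / 2) * ind t + (C / (2 * b)) * (ind t * (cmod (g t))^2))"
          using gint indint by simp
      qed
      also have "\<dots> = (b * C / 2) * \<tau> + (C / (2 * b)) * N2"
        using gint indint by (simp add: N2eq intt)
      finally show "(\<integral>t. ind t * (cmod (A_op k \<tau> g t) * cmod (g t)) \<partial>lborel) \<le> (b * (C * \<tau>) + C * N2 / b) / 2"
        by (simp add: field_simps)
    qed
    finally show ?thesis .
  qed
  have "\<bar>Re (A_form k \<tau> g) / N2\<bar> \<le> cmod (A_form k \<tau> g) / N2"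
    using N2pos abs_Re_le_cmod by (simp add: abs_divide divide_right_mono)
  also have "\<dots> \<le> sqrt ((C * \<tau>) * (C * N2)) / N2"
    using sub2 N2pos by (simp add: divide_right_mono)
  also have "sqrt ((C * \<tau>) * (C * N2)) / N2 = sqrt (E + 1 / \<tau>)"
  proof -
    have "(C * \<tau>) * (C * N2) / N2^2 = E + 1 / \<tau>"
      unfolding C_def V_def using tau N2pos V0 E0 by (simp add: field_simps power2_eq_square)
    then have "sqrt ((C * \<tau>) * (C * N2) / N2^2) = sqrt (E + 1 / \<tau>)" by simp
    then show ?thesis using N2pos by (simp add: real_sqrt_divide)
  qed
  finally show ?thesis unfolding E_def N2_def .
qed

theorem proposition2:
  fixes sm :: "complex \<Rightarrow> 'a::banach \<Rightarrow> 'a"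
    and ip :: "'a \<Rightarrow> 'a \<Rightarrow> complex"
    and K :: "real \<Rightarrow> 'a \<Rightarrow> 'a"
    and h :: 'a
    and \<mu> :: "real measure"
  assumes "complex_hilbert sm ip"
    and "isometry_semigroup sm K"
    and "h \<in> unitary_part K"
    and "sets \<mu> = sets borel"
    and "finite_measure \<mu>"
    and "\<forall>x. emeasure \<mu> {x} = 0"
    and "\<forall>s\<ge>0. \<forall>t\<ge>0. ip (K s h) (K t h) = (\<integral>x. cis ((s - t) * x) \<partial>\<mu>)"
  shows "((\<lambda>\<tau>. lambda1 ip K h \<tau>) \<longlongrightarrow> 0) at_top"
proof -
  note S = assms(4) and F = assms(5) and NA = assms(6) and hk = assms(7)
  define B where "B = (\<lambda>\<tau>. sqrt ((\<integral>p. 4 / (1 + \<tau> * \<bar>fst p - snd p\<bar>) \<partial>(\<mu> \<Otimes>\<^sub>M \<mu>)) + 1 / \<tau>))"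
  have bound: "norm (lambda1 ip K h \<tau>) \<le> B \<tau>" if tau: "\<tau> > 0" for \<tau>
  proof -
    define k where "k = (\<lambda>s t. ip (K s h) (K t h))"
    define Q where "Q = {Re (A_form k \<tau> g) / L2_normsq \<tau> g | g. L2_on \<tau> g \<and> L2_normsq \<tau> g \<noteq> 0}"
    have lam: "lambda1 ip K h \<tau> = Sup Q" unfolding lambda1_def Q_def k_def ..
    have Qb: "\<bar>q\<bar> \<le> B \<tau>" if "q \<in> Q" for q
      using that rayleigh_bound[OF S F tau, of k] hk unfolding Q_def B_def k_def by auto
    have one: "L2_on \<tau> (\<lambda>_. 1)"
      unfolding L2_on_def set_integrable_def
      by (auto intro!: integrable_real_indicator simp: emeasure_lborel_Icc_eq)
    have one2: "L2_normsq \<tau> (\<lambda>_. 1) = \<tau>"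
      unfolding L2_normsq_def set_lebesgue_integral_def using tau by simp
    define q0 where "q0 = Re (A_form k \<tau> (\<lambda>_. 1)) / L2_normsq \<tau> (\<lambda>_. 1)"
    have q0: "q0 \<in> Q" unfolding Q_def q0_def using one one2 tau by (intro CollectI exI[of _ "\<lambda>_. 1"]) auto
    have bdd: "bdd_above Q" using Qb by (intro bdd_aboveI[of _ "B \<tau>"]) (auto dest: abs_le_D1)
    have "Sup Q \<le> B \<tau>" using q0 Qb by (intro cSup_least) (auto dest: abs_le_D1)
    moreover have "q0 \<le> Sup Q" using q0 bdd by (rule cSup_upper)
    moreover have "- B \<tau> \<le> q0" using Qb[OF q0] by simp
    ultimately show ?thesis unfolding lam by simp
  qed
  have "(B \<longlongrightarrow> sqrt (0 + 0)) at_top"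
    unfolding B_def
    by (intro tendsto_real_sqrt tendsto_add E_tendsto[OF S F NA]) real_asymp
  then have B0: "(B \<longlongrightarrow> 0) at_top" by simp
  show ?thesis
  proof (rule Lim_null_comparison[OF _ B0])
    show "\<forall>\<^sub>F x in at_top. norm (lambda1 ip K h x) \<le> B x"
      using eventually_gt_at_top[of "0::real"] by eventually_elim (rule bound)
  qed
qed

end
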